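(* Let $\mathbb{Y}$ be a lcscH space. Let $(\zeta_n)_{n\in\mathbb{N}}$ be a sequence of locally finite point processes on $\mathbb{Y}$ and let $\zeta$ be another locally finite point process on $\mathbb{Y}$ such that $\mathbf{d}_{\mathbf{KR}}(\zeta_n,\zeta)\to 0$ as $n\to\infty$. Then $\zeta_n$ converges in distribution to $\zeta$ as $n\to\infty$.
   Context: A lcscH space is a locally compact Hausdorff space with countable base, equipped with its Borel $\sigma$-field. $\mathsf{N}_{\mathbb{Y}}$ denotes the space of $\sigma$-finite counting measures on $\mathbb{Y}$, with the $\sigma$-field generated by the maps $\omega\mapsto\omega(A)$, $A$ Borel; $\widetilde{\mathsf{N}}_{\mathbb{Y}}\subset\mathsf{N}_{\mathbb{Y}}$ is the set of locally finite counting measures (finite on relatively compact sets), equipped with the vague topology (generated by the maps $\omega\mapsto\int g\,d\omega$ for continuous compactly supported $g\ge 0$). A (locally finite) point process is a random element of $\mathsf{N}_{\mathbb{Y}}$ (resp. $\widetilde{\mathsf{N}}_{\mathbb{Y}}$); convergence in distribution refers to the vague topology. For measures $\nu_1,\nu_2$ on $\mathbb{Y}$, $\mathbf{d}_{\mathbf{TV}}(\nu_1,\nu_2):=\sup\{|\nu_1(A)-\nu_2(A)|: A \text{ Borel},\ \nu_1(A),\nu_2(A)<\infty\}$. For point processes with distributions $\mathbb{Q}_1,\mathbb{Q}_2$ on $\mathsf{N}_{\mathbb{Y}}$, the Kantorovich–Rubinstein distance is $\mathbf{d}_{\mathbf{KR}}(\mathbb{Q}_1,\mathbb{Q}_2):=\inf_{\mathbb{C}}\int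 \mathbf{d}_{\mathbf{TV}}(\omega_1,\omega_2)\,\mathbb{C}(d(\omega_1,\omega_2))$, the infimum over all probability measures $\mathbb{C}$ on $\mathsf{N}_{\mathbb{Y}}\times\mathsf{N}_{\mathbb{Y}}$ with marginals $\mathbb{Q}_1$ and $\mathbb{Q}_2$; one writes $\mathbf{d}_{\mathbf{KR}}(\zeta_n,\zeta)$ for the distance between the distributions. *)

theory Defs
  imports "HOL-Probability.Probability"
begin

definition counting_measures :: "'a::topological_space measure set" where
  "counting_measures = {\<omega>. sets \<omega> = sets borel \<and> sigma_finite_measure \<omega> \<and>
      (\<forall>A\<in>sets borel. emeasure \<omega> A \<in> range of_nat \<union> {\<infinity>})}"

definition NY :: "'a::topological_space measure measure" where
  "NY = sigma counting_measures
      {{\<omega>\<in>counting_measures. emeasure \<omega> A \<in> B} | A B. A \<in> sets borel \<and> B \<in> sets borel}"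

definition loc_fin_counting_measures :: "'a::topological_space measure set" where
  "loc_fin_counting_measures = {\<omega>\<in>counting_measures.
      \<forall>A\<in>sets borel. compact (closure A) \<longrightarrow> emeasure \<omega> A < \<infinity>}"

definition vague_topology :: "'a::topological_space measure topology" where
  "vague_topology = topology_generated_by
     {{\<omega>\<in>loc_fin_counting_measures. integral\<^sup>L \<omega> (g::'a \<Rightarrow> real) \<in> U} | g U.
        continuous_on UNIV g \<and> compact (closure {x. g x \<noteq> 0}) \<and> (\<forall>x. g x \<ge> 0) \<and> open U}"

definition dTV :: "'a::topological_space measure \<Rightarrow> 'a measure \<Rightarrow> ennreal" where
  "dTV \<nu>1 \<nu>2 = (SUP A\<in>{A\<in>sets borel. emeasure \<nu>1 A < \<infinity> \<and> emeasure \<nu>2 A < \<infinity>}.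
        ennreal \<bar>measure \<nu>1 A - measure \<nu>2 A\<bar>)"

definition couplings :: "'a::topological_space measure measure \<Rightarrow> 'a measure measure
     \<Rightarrow> ('a measure \<times> 'a measure) measure set" where
  "couplings Q1 Q2 = {C. prob_space C \<and> sets C = sets (NY \<Otimes>\<^sub>M NY) \<and>
      distr C NY fst = Q1 \<and> distr C NY snd = Q2}"

definition dKR :: "'a::topological_space measure measure \<Rightarrow> 'a measure measure \<Rightarrow> ennreal" where
  "dKR Q1 Q2 = (INF C\<in>couplings Q1 Q2. \<integral>\<^sup>+ p. dTV (fst p) (snd p) \<partial>C)"

definition point_process_distr :: "'a::topological_space measure measure \<Rightarrow> bool" where
  "point_process_distr Q \<longleftrightarrow> prob_space Q \<and> sets Q = sets NY"

definition loc_fin_point_process_distr :: "'a::topological_space measure measure \<Rightarrow> bool" where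
  "loc_fin_point_process_distr Q \<longleftrightarrow> point_process_distr Q \<and>
      (AE \<omega> in Q. \<omega> \<in> loc_fin_counting_measures)"

definition converges_in_distribution ::
    "(nat \<Rightarrow> 'a::topological_space measure measure) \<Rightarrow> 'a measure measure \<Rightarrow> bool" where
  "converges_in_distribution Qs Q \<longleftrightarrow>
     (\<forall>F::'a measure \<Rightarrow> real. continuous_map vague_topology euclideanreal F \<and>
        bounded (F ` topspace vague_topology) \<longrightarrow>
        (\<lambda>n. \<integral>\<omega>. indicator loc_fin_counting_measures \<omega> * F \<omega> \<partial>(Qs n))
          \<longlonglongrightarrow> (\<integral>\<omega>. indicator loc_fin_counting_measures \<omega> * F \<omega> \<partial>Q))"

end

theory Submission
  imports Defs
begin

lemma compact_closure_sub:
  fixes S K :: "'a::t2_space set"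
  assumes "compact K" "S \<subseteq> K"
  shows "compact (closure S)"
proof -
  have "closed K" using assms(1) by (rule compact_imp_closed)
  then have "closure S \<subseteq> K" using assms(2) by (rule closure_minimal[rotated])
  then have "closure S = K \<inter> closure S" by blast
  moreover have "compact (K \<inter> closure S)" using assms(1) closed_closure by (rule compact_Int_closed)
  ultimately show ?thesis by simp
qed

lemma cover:
  assumes lc: "locally_compact_space (euclidean :: 'a topology)"
  obtains W :: "nat \<Rightarrow> 'a::{t2_space, second_countable_topology} set" where "\<And>n. open (W n)" "\<And>n. compact (closure (W n))"
    "incseq W" "(\<Union>n. W n) = UNIV"
proof -
  define F where "F = {U::'a set. open U \<and> compact (closure U)}"
  have "UNIV \<subseteq> \<Union>F"
  proof (rule subsetI)
    fix x :: 'a assume "x \<in> UNIV"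
    have "x \<in> topspace euclidean" by simp
    then have "\<exists>U K. openin euclidean U \<and> compactin euclidean K \<and> x \<in> U \<and> U \<subseteq> K"
      using lc unfolding locally_compact_space_def by blast
    then obtain U K where "openin euclidean U" "compactin euclidean K" "x \<in> U" "U \<subseteq> K"
      by blast
    then have "open U" "compact K" by auto
    have "compact (closure U)" using \<open>compact K\<close> \<open>U \<subseteq> K\<close> by (rule compact_closure_sub)
    then have "U \<in> F" using \<open>open U\<close> unfolding F_def by blast
    then show "x \<in> \<Union>F" using \<open>x \<in> U\<close> by blast
  qed
  then have "\<Union>F = UNIV" by blast
  have "\<And>S. S \<in> F \<Longrightarrow> open S" unfolding F_def by blast
  then obtain F' where F': "F' \<subseteq> F" "countable F'" "\<Union>F' = \<Union>F"
    by (rule Lindelof)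
  have "F' \<noteq> {}" using F' \<open>\<Union>F = UNIV\<close> by auto
  define V where "V = from_nat_into F'"
  have V: "range V = F'" unfolding V_def by (rule range_from_nat_into[OF \<open>F' \<noteq> {}\<close> F'(2)])
  have VF: "V i \<in> F" for i using V F'(1) by blast
  then have o: "open (V i)" and c: "compact (closure (V i))" for i unfolding F_def by auto
  define W where "W n = (\<Union>i\<in>{..n}. V i)" for n
  show ?thesis
  proof
    fix n
    show "open (W n)" unfolding W_def using o by (intro open_UN) blast
    have "compact (\<Union>i\<in>{..n}. closure (V i))" using c by (intro compact_UN) auto
    moreover have "W n \<subseteq> (\<Union>i\<in>{..n}. closure (V i))" unfolding W_def using closure_subset by blast
    ultimately show "compact (closure (W n))" by (rule compact_closure_sub)
  next
    show "incseq W" unfolding W_def incseq_def by (auto intro: order_trans)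
    show "(\<Union>n. W n) = UNIV"
    proof (rule set_eqI, rule iffI)
      fix x :: 'a
      assume "x \<in> UNIV"
      then have "x \<in> \<Union>F'" using F'(3) \<open>\<Union>F = UNIV\<close> by simp
      then obtain i where "x \<in> V i" using V by blast
      then have "x \<in> W i" unfolding W_def by blast
      then show "x \<in> (\<Union>n. W n)" by blast
    qed simp
  qed
qed

lemma count_val:
  assumes "\<omega> \<in> counting_measures" "A \<in> sets borel" "emeasure \<omega> A < \<infinity>"
  obtains a :: nat where "emeasure \<omega> A = of_nat a" "measure \<omega> A = real a"
proof -
  have "emeasure \<omega> A \<in> range of_nat \<union> {\<infinity>}" using assms unfolding counting_measures_def by auto
  then obtain a where a: "emeasure \<omega> A = of_nat a" using assms(3) by auto
  then have "measure \<omega> A = real a" unfolding measure_def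
    by (metis enn2real_ennreal ennreal_of_nat_eq_real_of_nat of_nat_0_le_iff)
  then show ?thesis using a that by blast
qed

lemma loc_fin_eq:
  fixes W :: "nat \<Rightarrow> 'a::topological_space set" and \<omega>1 \<omega>2 :: "'a measure"
  assumes W: "\<And>n. open (W n)" "\<And>n. compact (closure (W n))" "incseq W" "(\<Union>n. W n) = UNIV"
    and w1: "\<omega>1 \<in> loc_fin_counting_measures" and w2: "\<omega>2 \<in> loc_fin_counting_measures"
    and d: "dTV \<omega>1 \<omega>2 < 1"
  shows "\<omega>1 = \<omega>2"
proof -
  have c1: "\<omega>1 \<in> counting_measures" and c2: "\<omega>2 \<in> counting_measures"
    using w1 w2 unfolding loc_fin_counting_measures_def by auto
  have s1: "sets \<omega>1 = sets borel" and s2: "sets \<omega>2 = sets borel"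
    using c1 c2 unfolding counting_measures_def by auto
  have rc: "emeasure \<omega>1 B = emeasure \<omega>2 B" if B: "B \<in> sets borel" "compact (closure B)" for B
  proof -
    have f1: "emeasure \<omega>1 B < \<infinity>" and f2: "emeasure \<omega>2 B < \<infinity>"
      using w1 w2 B unfolding loc_fin_counting_measures_def by auto
    obtain a where a: "emeasure \<omega>1 B = of_nat a" "measure \<omega>1 B = real a"
      using count_val[OF c1 B(1) f1] by blast
    obtain b where b: "emeasure \<omega>2 B = of_nat b" "measure \<omega>2 B = real b"
      using count_val[OF c2 B(1) f2] by blast
    have "ennreal \<bar>measure \<omega>1 B - measure \<omega>2 B\<bar> \<le> dTV \<omega>1 \<omega>2"
      unfolding dTV_def by (rule SUP_upper) (use B f1 f2 in auto)
    then have "ennreal \<bar>real a - real b\<bar> \<le> dTV \<omega>1 \<omega>2" using a b by simp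
    then have "ennreal \<bar>real a - real b\<bar> < 1" using d by (rule le_less_trans)
    then have "\<bar>real a - real b\<bar> < 1"
      by (metis ennreal_1 ennreal_less_iff abs_ge_zero)
    then have "a = b" by linarith
    then show ?thesis using a b by simp
  qed
  show ?thesis
  proof (rule measure_eqI)
    show "sets \<omega>1 = sets \<omega>2" using s1 s2 by simp
    fix A :: "'a set" assume A: "A \<in> sets \<omega>1"
    then have Ab: "A \<in> sets borel" using s1 by simp
    have Wb: "A \<inter> W n \<in> sets borel" for n using Ab W(1) by auto
    have cc: "compact (closure (A \<inter> W n))" for n
    proof -
      have "closure (A \<inter> W n) \<subseteq> closure (W n)" by (simp add: closure_mono)
      then have "closure (A \<inter> W n) = closure (W n) \<inter> closure (A \<inter> W n)" by auto
      then show ?thesis using W(2)[of n] by (metis compact_Int_closed closed_closure)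
    qed
    have inc: "incseq (\<lambda>n. A \<inter> W n)" using W(3) unfolding incseq_def by auto
    have un: "(\<Union>n. A \<inter> W n) = A" using W(4) by auto
    have "emeasure \<omega>1 A = (SUP n. emeasure \<omega>1 (A \<inter> W n))"
      using SUP_emeasure_incseq[of "\<lambda>n. A \<inter> W n" \<omega>1] inc Wb s1 un by (auto simp: image_subset_iff)
    also have "\<dots> = (SUP n. emeasure \<omega>2 (A \<inter> W n))" using rc[OF Wb cc] by simp
    also have "\<dots> = emeasure \<omega>2 A"
      using SUP_emeasure_incseq[of "\<lambda>n. A \<inter> W n" \<omega>2] inc Wb s2 un by (auto simp: image_subset_iff)
    finally show "emeasure \<omega>1 A = emeasure \<omega>2 A" .
  qed
qed

lemma dKR_bound:
  fixes W :: "nat \<Rightarrow> 'a::topological_space set" and Q1 Q2 :: "'a measure measure"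
  assumes W: "\<And>n. open (W n)" "\<And>n. compact (closure (W n))" "incseq W" "(\<Union>n. W n) = UNIV"
    and Q1: "loc_fin_point_process_distr Q1" and Q2: "loc_fin_point_process_distr Q2"
    and km: "k \<in> borel_measurable NY" and kb: "\<And>x y. \<bar>k x - k y\<bar> \<le> 1"
  shows "ennreal \<bar>(\<integral>\<omega>. k \<omega> \<partial>Q1) - (\<integral>\<omega>. k \<omega> \<partial>Q2)\<bar> \<le> dKR Q1 Q2"
  unfolding dKR_def
proof (rule INF_greatest)
  fix C assume "C \<in> couplings Q1 Q2"
  then have pC: "prob_space C" and sC: "sets C = sets (NY \<Otimes>\<^sub>M NY)"
    and d1: "distr C NY fst = Q1" and d2: "distr C NY snd = Q2"
    unfolding couplings_def by auto
  interpret prob_space C by (rule pC)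
  have mf: "fst \<in> measurable C NY" using measurable_cong_sets[OF sC refl] measurable_fst by blast
  have ms: "snd \<in> measurable C NY" using measurable_cong_sets[OF sC refl] measurable_snd by blast
  have i1: "(\<integral>\<omega>. k \<omega> \<partial>Q1) = (\<integral>p. k (fst p) \<partial>C)"
    using integral_distr[OF mf km] d1 by simp
  have i2: "(\<integral>\<omega>. k \<omega> \<partial>Q2) = (\<integral>p. k (snd p) \<partial>C)"
    using integral_distr[OF ms km] d2 by simp
  define B where "B = 1 + \<bar>k undefined\<bar>"
  have kB: "norm (k x) \<le> B" for x
    using kb[of x undefined] unfolding B_def by simp
  have int1: "integrable C (\<lambda>p. k (fst p))"
    by (rule integrable_const_bound[where B=B]) (use kB measurable_compose[OF mf km] in auto)
  have int2: "integrable C (\<lambda>p. k (snd p))"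
    by (rule integrable_const_bound[where B=B]) (use kB measurable_compose[OF ms km] in auto)
  have AE1: "AE p in C. fst p \<in> loc_fin_counting_measures"
  proof -
    have "AE \<omega> in distr C NY fst. \<omega> \<in> loc_fin_counting_measures"
      unfolding d1 using Q1 unfolding loc_fin_point_process_distr_def by blast
    then show ?thesis by (rule AE_distrD[OF mf])
  qed
  have AE2: "AE p in C. snd p \<in> loc_fin_counting_measures"
  proof -
    have "AE \<omega> in distr C NY snd. \<omega> \<in> loc_fin_counting_measures"
      unfolding d2 using Q2 unfolding loc_fin_point_process_distr_def by blast
    then show ?thesis by (rule AE_distrD[OF ms])
  qed
  have "ennreal \<bar>(\<integral>\<omega>. k \<omega> \<partial>Q1) - (\<integral>\<omega>. k \<omega> \<partial>Q2)\<bar>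
      = ennreal (norm (\<integral>p. k (fst p) - k (snd p) \<partial>C))"
    using i1 i2 Bochner_Integration.integral_diff[OF int1 int2] by simp
  also have "\<dots> \<le> (\<integral>\<^sup>+p. norm (k (fst p) - k (snd p)) \<partial>C)"
    by (rule integral_norm_bound_ennreal) (use int1 int2 in auto)
  also have "\<dots> \<le> (\<integral>\<^sup>+p. dTV (fst p) (snd p) \<partial>C)"
  proof (rule nn_integral_mono_AE)
    show "AE p in C. ennreal (norm (k (fst p) - k (snd p))) \<le> dTV (fst p) (snd p)"
      using AE1 AE2
    proof eventually_elim
      case (elim p)
      show ?case
      proof (cases "dTV (fst p) (snd p) < 1")
        case True
        then have "fst p = snd p" using loc_fin_eq[OF W elim] by blast
        then show ?thesis by simp
      next
        case False
        then have "1 \<le> dTV (fst p) (snd p)" by simp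
        moreover have "ennreal (norm (k (fst p) - k (snd p))) \<le> 1"
          using kb[of "fst p" "snd p"] by (simp add: ennreal_le_1)
        ultimately show ?thesis by (rule order_trans[rotated])
      qed
    qed
  qed
  finally show "ennreal \<bar>(\<integral>\<omega>. k \<omega> \<partial>Q1) - (\<integral>\<omega>. k \<omega> \<partial>Q2)\<bar> \<le> (\<integral>\<^sup>+p. dTV (fst p) (snd p) \<partial>C)" .
qed

lemma topspace_vague: "loc_fin_counting_measures \<subseteq> topspace (vague_topology :: 'a::topological_space measure topology)"
proof -
  have "continuous_on UNIV (\<lambda>x::'a. 0::real) \<and> compact (closure {x::'a. (0::real) \<noteq> 0}) \<and> (\<forall>x::'a. (0::real) \<ge> 0) \<and> open (UNIV::real set)"
    by simp
  then have "{\<omega>\<in>loc_fin_counting_measures. integral\<^sup>L \<omega> (\<lambda>x::'a. 0::real) \<in> UNIV} \<in>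
     {{\<omega>\<in>loc_fin_counting_measures. integral\<^sup>L \<omega> (g::'a \<Rightarrow> real) \<in> U} | g U.
        continuous_on UNIV g \<and> compact (closure {x. g x \<noteq> 0}) \<and> (\<forall>x. g x \<ge> 0) \<and> open U}"
    by blast
  then show ?thesis unfolding vague_topology_def by auto
qed

theorem proposition2p1:
  fixes Qs :: "nat \<Rightarrow> 'a::{t2_space, second_countable_topology} measure measure"
    and Q :: "'a measure measure"
  assumes "locally_compact_space (euclidean :: 'a topology)"
    and "\<And>n. loc_fin_point_process_distr (Qs n)"
    and "loc_fin_point_process_distr Q"
    and "(\<lambda>n. dKR (Qs n) Q) \<longlonglongrightarrow> 0"
  shows "converges_in_distribution Qs Q"
proof -
  obtain W :: "nat \<Rightarrow> 'a set" where W: "\<And>n. open (W n)" "\<And>n. compact (closure (W n))"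
    "incseq W" "(\<Union>n. W n) = UNIV"
    using cover[OF assms(1)] by blast
  have sQs: "sets (Qs n) = sets NY" for n
    using assms(2) unfolding loc_fin_point_process_distr_def point_process_distr_def by auto
  have sQ: "sets Q = sets NY"
    using assms(3) unfolding loc_fin_point_process_distr_def point_process_distr_def by auto
  show ?thesis unfolding converges_in_distribution_def
  proof (intro allI impI)
    fix F :: "'a measure \<Rightarrow> real"
    assume F: "continuous_map vague_topology euclideanreal F \<and> bounded (F ` topspace vague_topology)"
    define h where "h = (\<lambda>\<omega>. indicator loc_fin_counting_measures \<omega> * F \<omega>)"
    have "(\<lambda>n. \<integral>\<omega>. h \<omega> \<partial>Qs n) \<longlonglongrightarrow> (\<integral>\<omega>. h \<omega> \<partial>Q)"
    proof (cases "h \<in> borel_measurable NY")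
      case False
      have "h \<notin> borel_measurable (Qs n)" for n using False measurable_cong_sets[OF sQs refl] by blast
      then have "\<not> integrable (Qs n) h" for n by blast
      then have z1: "(\<integral>\<omega>. h \<omega> \<partial>Qs n) = 0" for n by (rule not_integrable_integral_eq)
      have "h \<notin> borel_measurable Q" using False measurable_cong_sets[OF sQ refl] by blast
      then have "\<not> integrable Q h" by blast
      then have z2: "(\<integral>\<omega>. h \<omega> \<partial>Q) = 0" by (rule not_integrable_integral_eq)
      show ?thesis unfolding z1 z2 by simp
    next
      case True
      have "bounded (F ` loc_fin_counting_measures)"
        using F topspace_vague by (meson bounded_subset image_mono)
      then obtain B where B: "B > 0" "\<And>\<omega>. \<omega> \<in> loc_fin_counting_measures \<Longrightarrow> \<bar>F \<omega>\<bar> \<le> B"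
        unfolding bounded_pos by auto
      have hB: "\<bar>h \<omega>\<bar> \<le> B" for \<omega>
        using B unfolding h_def by (cases "\<omega> \<in> loc_fin_counting_measures") auto
      define k where "k \<omega> = h \<omega> / (2 * B)" for \<omega>
      have km: "k \<in> borel_measurable NY" unfolding k_def using True by measurable
      have kb: "\<bar>k x - k y\<bar> \<le> 1" for x y
      proof -
        have "\<bar>h x - h y\<bar> \<le> 2 * B" using hB[of x] hB[of y] by linarith
        then show ?thesis using B unfolding k_def by (simp add: divide_simps diff_divide_distrib[symmetric] abs_divide)
      qed
      have bnd: "ennreal \<bar>(\<integral>\<omega>. k \<omega> \<partial>Qs n) - (\<integral>\<omega>. k \<omega> \<partial>Q)\<bar> \<le> dKR (Qs n) Q" for n
        by (rule dKR_bound[OF W assms(2) assms(3) km kb])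
      have "(\<lambda>n. ennreal \<bar>(\<integral>\<omega>. k \<omega> \<partial>Qs n) - (\<integral>\<omega>. k \<omega> \<partial>Q)\<bar>) \<longlonglongrightarrow> 0"
        by (rule tendsto_sandwich[OF _ _ tendsto_const assms(4)]) (use bnd in auto)
      then have "(\<lambda>n. ennreal \<bar>(\<integral>\<omega>. k \<omega> \<partial>Qs n) - (\<integral>\<omega>. k \<omega> \<partial>Q)\<bar>) \<longlonglongrightarrow> ennreal 0"
        by simp
      then have "(\<lambda>n. \<bar>(\<integral>\<omega>. k \<omega> \<partial>Qs n) - (\<integral>\<omega>. k \<omega> \<partial>Q)\<bar>) \<longlonglongrightarrow> 0"
        by (subst (asm) tendsto_ennreal_iff) auto
      then have "(\<lambda>n. (\<integral>\<omega>. k \<omega> \<partial>Qs n) - (\<integral>\<omega>. k \<omega> \<partial>Q)) \<longlonglongrightarrow> 0"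
        by (simp add: tendsto_rabs_zero_iff)
      then have "(\<lambda>n. 2 * B * ((\<integral>\<omega>. k \<omega> \<partial>Qs n) - (\<integral>\<omega>. k \<omega> \<partial>Q))) \<longlonglongrightarrow> 2 * B * 0"
        by (intro tendsto_mult tendsto_const)
      moreover have hk: "h = (\<lambda>\<omega>. 2 * B * k \<omega>)" using B unfolding k_def by auto
      ultimately have "(\<lambda>n. (\<integral>\<omega>. h \<omega> \<partial>Qs n) - (\<integral>\<omega>. h \<omega> \<partial>Q)) \<longlonglongrightarrow> 0"
        by (simp add: right_diff_distrib)
      then show ?thesis by (rule LIM_zero_cancel)
    qed
    then show "(\<lambda>n. \<integral>\<omega>. indicator loc_fin_counting_measures \<omega> * F \<omega> \<partial>Qs n)
          \<longlonglongrightarrow> (\<integral>\<omega>. indicator loc_fin_counting_measures \<omega> * F \<omega> \<partial>Q)"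
      unfolding h_def .
  qed
qed

end
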